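(* Let $X,Y$ be complex Banach spaces, let $\emptyset\ne I\subseteq\mathbb R^n$ be closed with $I+I\subseteq I$, let $\mathcal B$ be a family of compact subsets of $X$ such that every $x\in X$ belongs to some $B\in\mathcal B$, and let $F:I\times X\to Y$ be Bohr $\mathcal B$-almost periodic. Suppose that: for every $l>0$ there exist $\mathbf t_0\in I$ and $k>0$ such that for every $\mathbf t\in I$ there exists $\mathbf t_0'\in I$ such that for every $\mathbf t_0''\in B(\mathbf t_0',l)\cap I$ we have $\mathbf t-\mathbf t_0''\in B(\mathbf t_0,kl)\cap I$. Then for each $B\in\mathcal B$ the set $\{F(\mathbf t;x):\mathbf t\in I,\ x\in B\}$ is relatively compact in $Y$; in particular $\sup_{\mathbf t\in I,x\in B}\|F(\mathbf t;x)\|_Y<\infty$.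
   Context: $B(\mathbf t_0,l)=\{\mathbf t\in\mathbb R^n:|\mathbf t-\mathbf t_0|\le l\}$ (Euclidean norm). For $I$ with $I+I\subseteq I$, a continuous $F:I\times X\to Y$ is Bohr $\mathcal B$-almost periodic if for every $B\in\mathcal B$ and $\epsilon>0$ there exists $l>0$ such that for each $\mathbf t_0\in I$ there exists $\tau\in B(\mathbf t_0,l)\cap I$ with $\|F(\mathbf t+\tau;x)-F(\mathbf t;x)\|_Y\le\epsilon$ for all $\mathbf t\in I$, $x\in B$. *)

theory Defs
  imports "HOL-Analysis.Analysis"
begin

definition bohr_B_almost_periodic ::
  "(real^'n) set \<Rightarrow> 'x::real_normed_vector set set \<Rightarrow> (real^'n \<Rightarrow> 'x \<Rightarrow> 'y::real_normed_vector) \<Rightarrow> bool"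
where
  "bohr_B_almost_periodic I \<B> F \<longleftrightarrow>
     continuous_on (I \<times> UNIV) (\<lambda>(t, x). F t x) \<and>
     (\<forall>B\<in>\<B>. \<forall>\<epsilon>>0. \<exists>l>0. \<forall>t0\<in>I. \<exists>\<tau>\<in>cball t0 l \<inter> I.
        \<forall>t\<in>I. \<forall>x\<in>B. norm (F (t + \<tau>) x - F t x) \<le> \<epsilon>)"

end

theory Submission
  imports Defs
begin

theorem proposition2p16:
  fixes I :: "(real^'n) set"
    and \<B> :: "'x::banach set set"
    and F :: "real^'n \<Rightarrow> 'x \<Rightarrow> 'y::banach"
  assumes "I \<noteq> {}" and "closed I"
    and "\<forall>a\<in>I. \<forall>b\<in>I. a + b \<in> I"
    and "\<forall>B\<in>\<B>. compact B"
    and "\<forall>x. \<exists>B\<in>\<B>. x \<in> B"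
    and "bohr_B_almost_periodic I \<B> F"
    and "\<forall>l>0. \<exists>t0\<in>I. \<exists>k>0. \<forall>t\<in>I. \<exists>t0'\<in>I. \<forall>t0''\<in>cball t0' l \<inter> I.
            t - t0'' \<in> cball t0 (k * l) \<inter> I"
  shows "\<forall>B\<in>\<B>. compact (closure {F t x | t x. t \<in> I \<and> x \<in> B}) \<and>
                 (\<exists>M. \<forall>t\<in>I. \<forall>x\<in>B. norm (F t x) \<le> M)"
proof
  fix B assume BB: "B \<in> \<B>"
  define S where "S = {F t x | t x. t \<in> I \<and> x \<in> B}"
  have cont: "continuous_on (I \<times> UNIV) (\<lambda>(t, x). F t x)"
    and ap: "\<forall>\<epsilon>>0. \<exists>l>0. \<forall>t0\<in>I. \<exists>\<tau>\<in>cball t0 l \<inter> I.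
        \<forall>t\<in>I. \<forall>x\<in>B. norm (F (t + \<tau>) x - F t x) \<le> \<epsilon>"
    using assms(6) BB unfolding bohr_B_almost_periodic_def by auto
  have Bc: "compact B" using assms(4) BB by auto
  have cover: "\<exists>k. finite k \<and> closure S \<subseteq> (\<Union>c\<in>k. ball c e)" if e: "e > 0" for e
  proof -
    have e4: "e/4 > 0" using e by simp
    obtain l where l: "l > 0" and lp: "\<forall>t0\<in>I. \<exists>\<tau>\<in>cball t0 l \<inter> I.
        \<forall>t\<in>I. \<forall>x\<in>B. norm (F (t + \<tau>) x - F t x) \<le> e/4"
      using ap[rule_format, OF e4] by blast
    obtain t0 k where t0: "t0 \<in> I" and k: "k > 0" and tk: "\<forall>t\<in>I. \<exists>t0'\<in>I. \<forall>t0''\<in>cball t0' l \<inter> I.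
            t - t0'' \<in> cball t0 (k * l) \<inter> I"
      using assms(7) l by blast
    define K where "K = (cball t0 (k*l) \<inter> I) \<times> B"
    have Kc: "compact K" unfolding K_def
      by (intro compact_Times Bc compact_Int_closed assms(2)) auto
    have "continuous_on K (\<lambda>(t, x). F t x)"
      by (rule continuous_on_subset[OF cont]) (auto simp: K_def)
    hence Cc: "compact ((\<lambda>(t, x). F t x) ` K)" using Kc compact_continuous_image by blast
    then obtain c where c: "finite c" "(\<lambda>(t, x). F t x) ` K \<subseteq> (\<Union>y\<in>c. ball y (e/4))"
      using Cc[unfolded compact_eq_totally_bounded] e4 by blast
    have "S \<subseteq> (\<Union>y\<in>c. cball y (e/2))"
    proof
      fix z assume "z \<in> S"
      then obtain t x where tx: "t \<in> I" "x \<in> B" "z = F t x" unfolding S_def by blast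
      obtain t0' where t0': "t0' \<in> I" "\<forall>t0''\<in>cball t0' l \<inter> I. t - t0'' \<in> cball t0 (k * l) \<inter> I"
        using tk tx by blast
      obtain \<tau> where tau: "\<tau> \<in> cball t0' l \<inter> I" "\<forall>s\<in>I. \<forall>x\<in>B. norm (F (s + \<tau>) x - F s x) \<le> e/4"
        using lp t0' by blast
      have s: "t - \<tau> \<in> cball t0 (k * l) \<inter> I" using t0' tau by blast
      have d1: "norm (F t x - F (t - \<tau>) x) \<le> e/4" using tau(2) s tx by (metis IntE diff_add_cancel)
      have "F (t - \<tau>) x \<in> (\<lambda>(t, x). F t x) ` K" using s tx unfolding K_def by force
      then obtain y where y: "y \<in> c" "dist y (F (t - \<tau>) x) < e/4" using c by auto
      have "dist y z \<le> dist y (F (t - \<tau>) x) + dist (F (t - \<tau>) x) z" by (rule dist_triangle)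
      also have "\<dots> \<le> e/2" using y d1 tx by (simp add: dist_norm norm_minus_commute)
      finally show "z \<in> (\<Union>y\<in>c. cball y (e/2))" using y by auto
    qed
    moreover have "closed (\<Union>y\<in>c. cball y (e/2))" using c by auto
    ultimately have "closure S \<subseteq> (\<Union>y\<in>c. cball y (e/2))" by (rule closure_minimal)
    also have "\<dots> \<subseteq> (\<Union>y\<in>c. ball y e)" using e by auto
    finally show ?thesis using c by blast
  qed
  have "compact (closure S)"
    unfolding compact_eq_totally_bounded using cover complete_eq_closed by auto
  moreover have "bounded (closure S)" using calculation by (rule compact_imp_bounded)
  then obtain M where "\<forall>z\<in>closure S. norm z \<le> M"
    unfolding bounded_iff by blast
  note M = this
  have bnd: "\<forall>t\<in>I. \<forall>x\<in>B. norm (F t x) \<le> M"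
  proof (intro ballI)
    fix t x assume "t \<in> I" "x \<in> B"
    hence "F t x \<in> S" unfolding S_def by blast
    hence "F t x \<in> closure S" using closure_subset by blast
    thus "norm (F t x) \<le> M" using M by blast
  qed
  ultimately show "compact (closure {F t x | t x. t \<in> I \<and> x \<in> B}) \<and>
                 (\<exists>M. \<forall>t\<in>I. \<forall>x\<in>B. norm (F t x) \<le> M)"
    unfolding S_def[symmetric] by (intro conjI exI)
qed

end
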